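(* Let $\mathcal A$ be an $\mathbf{HpsUL}^\ast_\omega$-algebra. Then: (i) for all $x,y\in A$, $xy\le e$ iff $xy^2\le e$; (ii) for all $x_1,\dots,x_n\in A$ and all $k_1,\dots,k_n,l_1,\dots,l_n\in\mathbb Z_+$, $x_1^{k_1}\cdots x_n^{k_n}\le e$ iff $x_1^{l_1}\cdots x_n^{l_n}\le e$.
   Context: An $\mathbf{HpsUL}$-algebra is a structure $\mathcal A=\langle A,\wedge,\vee,\cdot,\backslash,/,e,f,\bot,\top\rangle$ such that: - $\langle A,\wedge,\vee,\bot,\top\rangle$ is a bounded lattice; - $\langle A,\cdot,e\rangle$ is a monoid; - for all $x,y,z$: $xy\le z$ iff $x\le z/y$ iff $y\le x\backslash z$; - for all $x,y,u,v$: $\lambda_u((x\vee y)\backslash x)\vee\rho_v((x\vee y)\backslash y)=e$, where $\lambda_a(b)=(a\backslash (ba))\wedge e$ and $\rho_a(b)=((ab)/a)\wedge e$. The constant $f$ is arbitrary. An $\mathbf{HpsUL}^\ast$-algebra is an $\mathbf{HpsUL}$-algebra satisfying weak commutativity: $xy\le e$ implies $yx\le e$. An $\mathbf{HpsUL}^\ast_\omega$-algebra is an $\mathbf{HpsUL}^\ast$-algebra satisfying $x\backslash e=x^2\backslash e$ for all $x$. Powers: $x^0=e$, $x^{n+1}=x^n\cdot x$. $\mathbb Z_+$ is the set of positive integers. *)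

theory Defs
  imports Main
begin

text \<open>An algebra is given on the whole type 'a by its operations:
 meet, join, multiplication, left residual (x \ z, ldiv x z), right residual (z / y, rdiv z y),
 unit e, arbitrary constant f, bottom, tp.\<close>

definition lat_le :: "('a \<Rightarrow> 'a \<Rightarrow> 'a) \<Rightarrow> 'a \<Rightarrow> 'a \<Rightarrow> bool" where
  "lat_le meet x y \<longleftrightarrow> meet x y = x"

definition bounded_lattice_ops ::
  "('a \<Rightarrow> 'a \<Rightarrow> 'a) \<Rightarrow> ('a \<Rightarrow> 'a \<Rightarrow> 'a) \<Rightarrow> 'a \<Rightarrow> 'a \<Rightarrow> bool" where
  "bounded_lattice_ops meet join bt tp \<longleftrightarrow>
     (\<forall>x y z. meet x (meet y z) = meet (meet x y) z) \<and>
     (\<forall>x y z. join x (join y z) = join (join x y) z) \<and>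
     (\<forall>x y. meet x y = meet y x) \<and>
     (\<forall>x y. join x y = join y x) \<and>
     (\<forall>x y. meet x (join x y) = x) \<and>
     (\<forall>x y. join x (meet x y) = x) \<and>
     (\<forall>x. meet bt x = bt) \<and>
     (\<forall>x. join tp x = tp)"

definition monoid_ops :: "('a \<Rightarrow> 'a \<Rightarrow> 'a) \<Rightarrow> 'a \<Rightarrow> bool" where
  "monoid_ops mult e \<longleftrightarrow>
     (\<forall>x y z. mult (mult x y) z = mult x (mult y z)) \<and>
     (\<forall>x. mult e x = x) \<and> (\<forall>x. mult x e = x)"

definition HpsUL ::
  "('a \<Rightarrow> 'a \<Rightarrow> 'a) \<Rightarrow> ('a \<Rightarrow> 'a \<Rightarrow> 'a) \<Rightarrow> ('a \<Rightarrow> 'a \<Rightarrow> 'a) \<Rightarrow>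
   ('a \<Rightarrow> 'a \<Rightarrow> 'a) \<Rightarrow> ('a \<Rightarrow> 'a \<Rightarrow> 'a) \<Rightarrow> 'a \<Rightarrow> 'a \<Rightarrow> 'a \<Rightarrow> 'a \<Rightarrow> bool" where
  "HpsUL meet join mult ldiv rdiv e f bt tp \<longleftrightarrow>
     bounded_lattice_ops meet join bt tp \<and>
     monoid_ops mult e \<and>
     (\<forall>x y z. (lat_le meet (mult x y) z \<longleftrightarrow> lat_le meet x (rdiv z y)) \<and>
              (lat_le meet x (rdiv z y) \<longleftrightarrow> lat_le meet y (ldiv x z))) \<and>
     (\<forall>x y u v.
        join (meet (ldiv u (mult (ldiv (join x y) x) u)) e)
             (meet (rdiv (mult v (ldiv (join x y) y)) v) e) = e)"

definition HpsUL_star ::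
  "('a \<Rightarrow> 'a \<Rightarrow> 'a) \<Rightarrow> ('a \<Rightarrow> 'a \<Rightarrow> 'a) \<Rightarrow> ('a \<Rightarrow> 'a \<Rightarrow> 'a) \<Rightarrow>
   ('a \<Rightarrow> 'a \<Rightarrow> 'a) \<Rightarrow> ('a \<Rightarrow> 'a \<Rightarrow> 'a) \<Rightarrow> 'a \<Rightarrow> 'a \<Rightarrow> 'a \<Rightarrow> 'a \<Rightarrow> bool" where
  "HpsUL_star meet join mult ldiv rdiv e f bt tp \<longleftrightarrow>
     HpsUL meet join mult ldiv rdiv e f bt tp \<and>
     (\<forall>x y. lat_le meet (mult x y) e \<longrightarrow> lat_le meet (mult y x) e)"

primrec mpow :: "('a \<Rightarrow> 'a \<Rightarrow> 'a) \<Rightarrow> 'a \<Rightarrow> 'a \<Rightarrow> nat \<Rightarrow> 'a" where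
  "mpow mult e x 0 = e"
| "mpow mult e x (Suc n) = mult (mpow mult e x n) x"

definition HpsUL_star_omega ::
  "('a \<Rightarrow> 'a \<Rightarrow> 'a) \<Rightarrow> ('a \<Rightarrow> 'a \<Rightarrow> 'a) \<Rightarrow> ('a \<Rightarrow> 'a \<Rightarrow> 'a) \<Rightarrow>
   ('a \<Rightarrow> 'a \<Rightarrow> 'a) \<Rightarrow> ('a \<Rightarrow> 'a \<Rightarrow> 'a) \<Rightarrow> 'a \<Rightarrow> 'a \<Rightarrow> 'a \<Rightarrow> 'a \<Rightarrow> bool" where
  "HpsUL_star_omega meet join mult ldiv rdiv e f bt tp \<longleftrightarrow>
     HpsUL_star meet join mult ldiv rdiv e f bt tp \<and>
     (\<forall>x. ldiv x e = ldiv (mpow mult e x 2) e)"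

fun mprod_pows :: "('a \<Rightarrow> 'a \<Rightarrow> 'a) \<Rightarrow> 'a \<Rightarrow> 'a list \<Rightarrow> nat list \<Rightarrow> 'a" where
  "mprod_pows mult e (x # xs) (k # ks) = mult (mpow mult e x k) (mprod_pows mult e xs ks)"
| "mprod_pows mult e _ _ = e"

end

theory Submission
  imports Defs
begin

theorem lemma2p4:
  fixes meet join mult ldiv rdiv :: "'a \<Rightarrow> 'a \<Rightarrow> 'a" and e f bt tp :: 'a
  assumes "HpsUL_star_omega meet join mult ldiv rdiv e f bt tp"
  shows "(\<forall>x y. lat_le meet (mult x y) e \<longleftrightarrow> lat_le meet (mult x (mpow mult e y 2)) e)
       \<and> (\<forall>(xs :: 'a list) (ks :: nat list) (ls :: nat list).
            length ks = length xs \<longrightarrow> length ls = length xs \<longrightarrow>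
            (\<forall>k\<in>set ks. 0 < k) \<longrightarrow> (\<forall>l\<in>set ls. 0 < l) \<longrightarrow>
            (lat_le meet (mprod_pows mult e xs ks) e \<longleftrightarrow>
             lat_le meet (mprod_pows mult e xs ls) e))"
proof -
  let ?le = "lat_le meet"
  have assoc: "\<And>x y z. mult (mult x y) z = mult x (mult y z)"
    and lu: "\<And>x. mult e x = x" and ru: "\<And>x. mult x e = x"
    using assms unfolding HpsUL_star_omega_def HpsUL_star_def HpsUL_def monoid_ops_def by auto
  have res: "\<And>x y z. ?le (mult x y) z \<longleftrightarrow> ?le y (ldiv x z)"
    using assms unfolding HpsUL_star_omega_def HpsUL_star_def HpsUL_def by blast
  have wc: "\<And>x y. ?le (mult x y) e \<Longrightarrow> ?le (mult y x) e"
    using assms unfolding HpsUL_star_omega_def HpsUL_star_def by blast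
  have om: "\<And>x. ldiv x e = ldiv (mpow mult e x 2) e"
    using assms unfolding HpsUL_star_omega_def by blast
  have sq: "\<And>y. mpow mult e y 2 = mult y y"
    by (simp add: numeral_2_eq_2 lu)
  have rot: "\<And>x y. ?le (mult x y) e \<longleftrightarrow> ?le (mult y x) e" using wc by blast
  have i: "\<And>x y. ?le (mult x y) e \<longleftrightarrow> ?le (mult x (mpow mult e y 2)) e"
  proof -
    fix x y
    have "?le (mult x y) e \<longleftrightarrow> ?le (mult y x) e" by (rule rot)
    also have "\<dots> \<longleftrightarrow> ?le x (ldiv y e)" by (rule res)
    also have "\<dots> \<longleftrightarrow> ?le x (ldiv (mpow mult e y 2) e)" by (simp add: om[of y, symmetric])
    also have "\<dots> \<longleftrightarrow> ?le (mult (mpow mult e y 2) x) e" by (rule res[symmetric])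
    also have "\<dots> \<longleftrightarrow> ?le (mult x (mpow mult e y 2)) e" by (rule rot)
    finally show "?le (mult x y) e \<longleftrightarrow> ?le (mult x (mpow mult e y 2)) e" .
  qed
  have ctx: "\<And>a b y. ?le (mult a (mult y b)) e \<longleftrightarrow> ?le (mult a (mult (mult y y) b)) e"
  proof -
    fix a b y
    have "?le (mult a (mult y b)) e \<longleftrightarrow> ?le (mult (mult b a) y) e"
      using rot[of a "mult y b"] rot[of y "mult b a"] by (simp add: assoc)
    also have "\<dots> \<longleftrightarrow> ?le (mult (mult b a) (mult y y)) e" using i sq by simp
    also have "\<dots> \<longleftrightarrow> ?le (mult a (mult (mult y y) b)) e"
      using rot[of b "mult a (mult y y)"] by (simp add: assoc)
    finally show "?le (mult a (mult y b)) e \<longleftrightarrow> ?le (mult a (mult (mult y y) b)) e" .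
  qed
  have key: "\<And>n. \<forall>a b. ?le (mult a (mult (mpow mult e y (Suc n)) b)) e \<longleftrightarrow> ?le (mult a (mult y b)) e" for y
  proof -
    fix n show "\<forall>a b. ?le (mult a (mult (mpow mult e y (Suc n)) b)) e \<longleftrightarrow> ?le (mult a (mult y b)) e"
    proof (induction n)
      case 0 then show ?case by (simp add: lu)
    next
      case (Suc n)
      show ?case
      proof (intro allI)
        fix a b
        have "mult a (mult (mpow mult e y (Suc (Suc n))) b)
             = mult (mult a (mpow mult e y n)) (mult (mult y y) b)"
          by (simp add: assoc)
        moreover have "mult a (mult (mpow mult e y (Suc n)) b)
             = mult (mult a (mpow mult e y n)) (mult y b)"
          by (simp add: assoc)
        ultimately show "?le (mult a (mult (mpow mult e y (Suc (Suc n))) b)) e \<longleftrightarrow> ?le (mult a (mult y b)) e"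
          using spec[OF spec[OF Suc, of a], of b] ctx[of "mult a (mpow mult e y n)" y b] by simp
      qed
    qed
  qed
  have ii: "\<forall>a (ks::nat list) (ls::nat list). length ks = length xs \<longrightarrow> length ls = length xs \<longrightarrow>
            (\<forall>k\<in>set ks. 0 < k) \<longrightarrow> (\<forall>l\<in>set ls. 0 < l) \<longrightarrow>
            (?le (mult a (mprod_pows mult e xs ks)) e \<longleftrightarrow>
             ?le (mult a (mprod_pows mult e xs ls)) e)" for xs
  proof (induction xs)
    case Nil then show ?case by simp
  next
    case (Cons x xs)
    show ?case
    proof (intro allI impI)
      fix a and ks ls :: "nat list"
      assume h: "length ks = length (x # xs)" "length ls = length (x # xs)"
        "\<forall>k\<in>set ks. 0 < k" "\<forall>l\<in>set ls. 0 < l"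
      obtain k :: nat and ks' where k: "ks = k # ks'" using h(1) by (cases ks) auto
      obtain l :: nat and ls' where l: "ls = l # ls'" using h(2) by (cases ls) auto
      obtain k' where k': "k = Suc k'" using h(3) k by (cases k) auto
      obtain l' where l': "l = Suc l'" using h(4) l by (cases l) auto
      have "?le (mult a (mprod_pows mult e (x # xs) ks)) e \<longleftrightarrow>
            ?le (mult a (mult x (mprod_pows mult e xs ks'))) e"
        using key[of x k'] k k' by simp
      also have "\<dots> \<longleftrightarrow> ?le (mult (mult a x) (mprod_pows mult e xs ks')) e"
        by (simp add: assoc)
      also have "\<dots> \<longleftrightarrow> ?le (mult (mult a x) (mprod_pows mult e xs ls')) e"
        using spec[OF spec[OF spec[OF Cons.IH, of "mult a x"], of ks'], of ls'] h k l by simp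
      also have "\<dots> \<longleftrightarrow> ?le (mult a (mult x (mprod_pows mult e xs ls'))) e"
        by (simp add: assoc)
      also have "\<dots> \<longleftrightarrow> ?le (mult a (mprod_pows mult e (x # xs) ls)) e"
        using key[of x l'] l l' by simp
      finally show "?le (mult a (mprod_pows mult e (x # xs) ks)) e \<longleftrightarrow>
            ?le (mult a (mprod_pows mult e (x # xs) ls)) e" .
    qed
  qed
  show ?thesis
  proof (intro conjI allI impI)
    fix x y show "?le (mult x y) e \<longleftrightarrow> ?le (mult x (mpow mult e y 2)) e" by (rule i)
  next
    fix xs :: "'a list" and ks ls :: "nat list"
    assume "length ks = length xs" "length ls = length xs" "\<forall>k\<in>set ks. 0 < k" "\<forall>l\<in>set ls. 0 < l"
    then show "?le (mprod_pows mult e xs ks) e \<longleftrightarrow> ?le (mprod_pows mult e xs ls) e"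
      using spec[OF spec[OF spec[OF ii[of xs], of e], of ks], of ls] lu by simp
  qed
qed

end
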